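(* For $m\ge 1$, let $\mathbf{D}_m$ be the $m\times m$ symmetric tridiagonal matrix with diagonal entries $d_{kk}=4k^2-6k+\tfrac52$ ($1\le k\le m$), off-diagonal entries $d_{k,k+1}=d_{k+1,k}=-k(2k-1)$ ($1\le k\le m-1$), and all other entries zero. Then for every $m\in\mathbb{N}$ its smallest eigenvalue satisfies $$\lambda_{\min}(\mathbf{D}_m)>\frac{4}{\ln^2 m+8\ln m+8}.$$ *)

theory Defs
  imports Complex_Main "Jordan_Normal_Form.Char_Poly"
begin

text \<open>The m x m symmetric tridiagonal matrix D_m. Matrix indices are 0-based,
  so the paper's row index k corresponds to i + 1.\<close>
definition Dmat :: "nat \<Rightarrow> real mat" where
  "Dmat m = mat m m (\<lambda>(i, j).
     if i = j then 4 * real (i+1)^2 - 6 * real (i+1) + 5/2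
     else if j = i + 1 then - (real (i+1) * (2 * real (i+1) - 1))
     else if i = j + 1 then - (real (j+1) * (2 * real (j+1) - 1))
     else 0)"

definition lambda_min :: "real mat \<Rightarrow> real" where
  "lambda_min A = Min {x. eigenvalue A x}"

end

theory Submission
  imports Defs
begin

fun Tq :: "nat \<Rightarrow> real" where
  "Tq 0 = 2"
| "Tq (Suc j) = (Tq j * (2 * real j + 2)^2 + 2) / (2 * real j + 3)^2"

lemma Tq_pos: "Tq j > 0"
  by (induction j) (auto intro!: divide_pos_pos add_pos_nonneg)

lemma ln3: "ln (3::real) \<ge> 1"
  using exp_le by (simp add: ln_ge_iff)

lemma ln2: "ln (2::real) \<ge> 7/12"
proof -
  have "ln (2::real) = ln (4/3 * (3/2))" by simp
  also have "\<dots> = ln (4/3) + ln (3/2)" by (rule ln_mult_pos) auto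
  finally have "ln (2::real) = ln (4/3) + ln (3/2)" .
  moreover have "ln (4/3::real) \<ge> 1/4" using ln_le_minus_one[of "3/4"] by (simp add: ln_div)
  moreover have "ln (3/2::real) \<ge> 1/3" using ln_le_minus_one[of "2/3"] by (simp add: ln_div)
  ultimately show ?thesis by simp
qed

lemma ln_step: assumes "k \<ge> 2" shows "ln (real k) - ln (real k - 1) \<ge> 1 / real k"
  "ln (real k) - ln (real k - 1) \<le> 1 / (real k - 1)"
proof -
  have "ln ((real k - 1) / real k) \<le> (real k - 1)/real k - 1"
    using assms by (intro ln_le_minus_one) auto
  moreover have "(real k - 1)/real k - 1 = - 1/real k" using assms by (simp add: field_simps)
  moreover have "ln ((real k - 1) / real k) = ln (real k - 1) - ln (real k)" using assms by (simp add: ln_div)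
  ultimately show "ln (real k) - ln (real k - 1) \<ge> 1 / real k" by simp
  have "ln (real k / (real k - 1)) \<le> real k / (real k - 1) - 1"
    using assms by (intro ln_le_minus_one) auto
  moreover have "real k / (real k - 1) - 1 = 1/(real k - 1)" using assms by (simp add: field_simps)
  moreover have "ln (real k / (real k - 1)) = ln (real k) - ln (real k - 1)" using assms by (simp add: ln_div)
  ultimately show "ln (real k) - ln (real k - 1) \<le> 1 / (real k - 1)" by simp
qed

lemma Tq_bound: "j \<ge> 2 \<Longrightarrow> Tq j \<le> (ln (real j + 1) + 23/6) / (2 * (real j + 1))"
proof (induction j rule: dec_induct[of 2])
  case base
  have "Tq 2 = 178/225" by (simp add: numeral_2_eq_2)
  then show ?case using ln3 by simp
next
  case (step n)
  define k where "k = n + 2"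
  have k: "k \<ge> 4" "n = k - 2" using step(1) by (auto simp: k_def)
  define L where "L = ln (real k)"
  define L' where "L' = ln (real k - 1)"
  have "ln 3 \<le> L" unfolding L_def using k by simp
  then have L1: "L \<ge> 1" using ln3 by linarith
  have LL: "L' \<le> L - 1/real k" using ln_step(1)[of k] k unfolding L_def L'_def by simp
  have rn: "real n = real k - 2" using k by simp
  have IH: "Tq n \<le> (L' + 23/6) / (2 * (real k - 1))"
  proof -
    have e: "real n + 1 = real k - 1" using rn by simp
    show ?thesis using step(3) unfolding L'_def e .
  qed
  have "Tq (Suc n) = (Tq n * (2 * real k - 2)^2 + 2) / (2 * real k - 1)^2"
    by (simp add: rn)
  also have "\<dots> \<le> ((L' + 23/6) / (2 * (real k - 1)) * (2 * real k - 2)^2 + 2) / (2 * real k - 1)^2"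
    using IH k by (intro divide_right_mono add_right_mono mult_right_mono) auto
  also have "\<dots> = (2*(real k - 1) * (L' + 23/6) + 2) / (2 * real k - 1)^2"
  proof -
    have "real k - 1 > 0" using k by simp
    then have "(L' + 23/6) / (2 * (real k - 1)) * (2 * real k - 2)^2 = 2*(real k - 1) * (L' + 23/6)"
      by (simp add: power2_eq_square divide_simps)
    then show ?thesis by simp
  qed
  also have "\<dots> \<le> (L + 23/6) / (2 * real k)"
  proof -
    have kk: "real k \<ge> 4" using k by simp
    have "2 * real k * (2*(real k - 1) * (L' + 23/6) + 2) \<le> 2 * real k * (2*(real k - 1) * (L - 1/real k + 23/6) + 2)"
      using LL kk by (intro mult_left_mono add_right_mono) auto
    also have "\<dots> = 4*real k*(real k - 1)*(L + 23/6) - 4 * (real k - 1) + 4 * real k"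
      using kk by (simp add: field_simps)
    also have "\<dots> \<le> (2 * real k - 1)^2 * (L + 23/6)"
      using L1 by (simp add: power2_eq_square algebra_simps)
    finally show ?thesis using kk by (simp add: field_simps)
  qed
  also have "\<dots> = (ln (real (Suc n) + 1) + 23/6) / (2 * (real (Suc n) + 1))"
  proof -
    have "real (Suc n) + 1 = real k" by (simp add: k_def)
    then show ?thesis by (simp only: L_def)
  qed
  finally show ?case .
qed

lemma hF: "((a::real)^2+8*a+8)/4 - (b^2+8*b+8)/4 = (a-b)*(2*a-(a-b)+8)/4"
  by (simp add: field_simps power2_eq_square)

definition Fb :: "nat \<Rightarrow> real" where
  "Fb m = ((ln (real m))^2 + 8 * ln (real m) + 8) / 4"

lemma S_bound: "m \<ge> 2 \<Longrightarrow> (\<Sum>j<m. Tq j) < Fb m"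
proof (induction m rule: dec_induct[of 2])
  case base
  have "(\<Sum>j<2. Tq j) = 28/9" by (simp add: numeral_2_eq_2)
  moreover have "Fb 2 > 28/9"
  proof -
    have *: "28/9 < (l^2 + 8 * l + 8) / 4" if "l \<ge> 7/12" for l :: real
    proof -
      have "l^2 \<ge> 0" by simp
      moreover have "(l^2 + 8 * l + 8) / 4 = l^2/4 + 2*l + 2" by simp
      ultimately show ?thesis using that by linarith
    qed
    show ?thesis unfolding Fb_def using *[OF ln2] by simp
  qed
  ultimately show ?case by simp
next
  case (step n)
  define k where "k = n + 1"
  have k: "k \<ge> 3" using step(1) by (simp add: k_def)
  define L where "L = ln (real k)"
  define L' where "L' = ln (real k - 1)"
  have L0: "L \<ge> 0" unfolding L_def using k by simp
  have t1: "L - L' \<ge> 1/real k" using ln_step(1)[of k] k unfolding L_def L'_def by simp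
  have "real k - 1 \<ge> 2" using k by simp
  then have "1 / (real k - 1) \<le> 1/2" by (simp add: field_simps)
  moreover have "ln (real k) - ln (real k - 1) \<le> 1 / (real k - 1)" using ln_step(2)[of k] k by simp
  ultimately have t2: "L - L' \<le> 1/2" unfolding L_def L'_def by linarith
  have Tn: "Tq n \<le> (L + 23/6) / (2 * real k)"
  proof -
    have n2: "n \<ge> 2" using k by (simp add: k_def)
    have e: "real n + 1 = real k" by (simp add: k_def)
    show ?thesis using Tq_bound[OF n2] unfolding e L_def .
  qed
  have "Fb k - Fb n = (L - L') * (2*L - (L - L') + 8) / 4"
  proof -
    have e: "real k - 1 = real n" by (simp add: k_def)
    show ?thesis unfolding Fb_def L_def L'_def e by (rule hF)
  qed
  also have "\<dots> \<ge> (1/real k) * (2*L - 1/real k + 8) / 4"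
  proof -
    have "(L - L') * (2*L - (L - L') + 8) - (1/real k) * (2*L - 1/real k + 8)
       = (L - L' - 1/real k) * (2*L + 8 - (L - L') - 1/real k)" by (simp add: algebra_simps)
    moreover have "1/real k \<le> 1" using k by simp
    then have "(L - L' - 1/real k) * (2*L + 8 - (L - L') - 1/real k) \<ge> 0"
      using t1 t2 L0 by (intro mult_nonneg_nonneg) linarith+
    ultimately have "(L - L') * (2*L - (L - L') + 8) - (1/real k) * (2*L - 1/real k + 8) \<ge> 0"
      by linarith
    then have "(1/real k) * (2*L - 1/real k + 8) \<le> (L - L') * (2*L - (L - L') + 8)" by linarith
    then show ?thesis by (rule divide_right_mono) simp
  qed
  finally have "Fb k - Fb n \<ge> (1/real k) * (2*L - 1/real k + 8) / 4" .
  moreover have "(1/real k) * (2*L - 1/real k + 8) / 4 \<ge> (L + 23/6) / (2 * real k)"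
  proof -
    have "1/real k \<le> 1/3" using k by (simp add: field_simps)
    then have "2*L - 1/real k + 8 \<ge> 2 * (L + 23/6)" by simp
    then show ?thesis using k by (simp add: field_simps)
  qed
  ultimately have "Tq n \<le> Fb k - Fb n" using Tn by linarith
  then show ?case using step(3) by (simp add: k_def)
qed


fun vv :: "nat \<Rightarrow> real" where
  "vv 0 = 1"
| "vv (Suc i) = vv i * (2 * real i + 1) / (2 * real i + 2)"

definition aa :: "nat \<Rightarrow> real" where
  "aa i = (2 * real i + 1)^2 * (vv i)^2 / 2"

definition ww :: "nat \<Rightarrow> real" where
  "ww i = real (i+1) * (2 * real (i+1) - 1)"

definition dd :: "nat \<Rightarrow> real" where
  "dd i = 4 * real (i+1)^2 - 6 * real (i+1) + 5/2"

lemma vv_pos: "vv i > 0"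
  by (induction i) auto

lemma aa_pos: "aa i > 0"
  unfolding aa_def using vv_pos[of i] by simp

lemma K1: "ww n * vv n * vv (Suc n) = aa n"
proof -
  have "real n + 1 > 0" by simp
  then show ?thesis unfolding ww_def aa_def
    by (simp add: field_simps power2_eq_square)
qed

lemma K2gen: "(q::real) \<noteq> 0 \<Longrightarrow> 2 * D = q^2 + r^2 \<Longrightarrow>
  D * (v * p / q)^2 = p^2 * v^2 / 2 + r^2 * (v * p / q)^2 / 2"
proof -
  assume q: "q \<noteq> 0" and D: "2 * D = q^2 + r^2"
  have D': "D = (q^2 + r^2) / 2" using D by simp
  show ?thesis unfolding D' using q by (simp add: field_simps power2_eq_square)
qed

lemma Tgen: "(q::real) \<noteq> 0 \<Longrightarrow> p \<noteq> 0 \<Longrightarrow> v \<noteq> 0 \<Longrightarrow> r \<noteq> 0 \<Longrightarrow>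
  (P / (p^2 * v^2 / 2) * q^2 + 2) / r^2 = (P + (v * p / q)^2) / (r^2 * (v * p / q)^2 / 2)"
  by (simp add: field_simps power2_eq_square)

lemma W: "(a::real) \<noteq> 0 \<Longrightarrow> a * (z - t / a)^2 = a * z^2 - 2 * t * z + t^2 * (1 / a)"
  by (simp add: field_simps power2_eq_square)

lemma K2: "dd (Suc n) * (vv (Suc n))^2 = aa n + aa (Suc n)"
proof -
  have q: "2 * real n + 2 \<noteq> 0" by simp
  have D: "2 * dd (Suc n) = (2 * real n + 2)^2 + (2 * real (Suc n) + 1)^2"
    unfolding dd_def by (simp add: power2_eq_square algebra_simps)
  show ?thesis unfolding aa_def vv.simps(2) using K2gen[OF q D, of "vv n" "2 * real n + 1"] by simp
qed

lemma K0: "dd 0 * (vv 0)^2 = aa 0"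
  unfolding dd_def aa_def by simp

lemma Tq_eq: "Tq j = (\<Sum>i\<le>j. (vv i)^2) / aa j"
proof (induction j)
  case 0
  then show ?case unfolding aa_def by simp
next
  case (Suc j)
  define P where "P = (\<Sum>i\<le>j. (vv i)^2)"
  define v where "v = vv j"
  have v: "v > 0" using vv_pos by (simp add: v_def)
  have e: "vv (Suc j) = v * (2 * real j + 1) / (2 * real j + 2)" by (simp add: v_def)
  have IH: "Tq j = P / ((2 * real j + 1)^2 * v^2 / 2)" using Suc by (simp add: P_def v_def aa_def)
  have "Tq (Suc j) = (P / ((2 * real j + 1)^2 * v^2 / 2) * (2 * real j + 2)^2 + 2) / (2 * real j + 3)^2"
    using IH by simp
  also have "\<dots> = (P + (v * (2 * real j + 1) / (2 * real j + 2))^2) / ((2 * real (Suc j) + 1)^2 * (v * (2 * real j + 1) / (2 * real j + 2))^2 / 2)"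
  proof -
    have "(2 * real (Suc j) + 1) = 2 * real j + 3" by simp
    then show ?thesis using Tgen[of "2 * real j + 2" "2 * real j + 1" v "2 * real j + 3" P] v by simp
  qed
  also have "\<dots> = (\<Sum>i\<le>Suc j. (vv i)^2) / aa (Suc j)"
    unfolding aa_def e[symmetric] by (simp add: P_def)
  finally show ?case .
qed

lemma H1: "(\<Sum>i<Suc n. dd i * (vv i * y i)^2) - 2 * (\<Sum>i<n. ww i * (vv i * y i) * (vv (Suc i) * y (Suc i)))
   = (\<Sum>i<n. aa i * (y i - y (Suc i))^2) + aa n * (y n)^2"
proof (induction n)
  case 0
  then show ?case using K0 by (simp add: power_mult_distrib)
next
  case (Suc n)
  have a: "dd (Suc n) * (vv (Suc n) * y (Suc n))^2 = (aa n + aa (Suc n)) * (y (Suc n))^2"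
  proof -
    have "dd (Suc n) * (vv (Suc n) * y (Suc n))^2 = (dd (Suc n) * (vv (Suc n))^2) * (y (Suc n))^2"
      by (simp only: power_mult_distrib mult.assoc)
    then show ?thesis unfolding K2 .
  qed
  have b: "ww n * (vv n * y n) * (vv (Suc n) * y (Suc n)) = aa n * y n * y (Suc n)"
    using K1[of n] by (metis mult.assoc mult.left_commute)
  have "(\<Sum>i<Suc (Suc n). dd i * (vv i * y i)^2) - 2 * (\<Sum>i<Suc n. ww i * (vv i * y i) * (vv (Suc i) * y (Suc i)))
     = ((\<Sum>i<Suc n. dd i * (vv i * y i)^2) - 2 * (\<Sum>i<n. ww i * (vv i * y i) * (vv (Suc i) * y (Suc i))))
       + dd (Suc n) * (vv (Suc n) * y (Suc n))^2 - 2 * (ww n * (vv n * y n) * (vv (Suc n) * y (Suc n)))"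
    by (simp add: algebra_simps del: vv.simps)
  also have "\<dots> = (\<Sum>i<n. aa i * (y i - y (Suc i))^2) + aa n * (y n)^2
       + (aa n + aa (Suc n)) * (y (Suc n))^2 - 2 * (aa n * y n * y (Suc n))"
    unfolding Suc a b ..
  also have "\<dots> = (\<Sum>i<Suc n. aa i * (y i - y (Suc i))^2) + aa (Suc n) * (y (Suc n))^2"
    by (simp add: power2_eq_square algebra_simps)
  finally show ?case .
qed

lemma wCS:
  assumes "finite A" "\<And>j. j \<in> A \<Longrightarrow> a j > (0::real)"
  shows "(\<Sum>j\<in>A. z j)^2 \<le> (\<Sum>j\<in>A. 1 / a j) * (\<Sum>j\<in>A. a j * (z j)^2)"
proof (cases "A = {}")
  case True then show ?thesis by simp
next
  case False
  define R where "R = (\<Sum>j\<in>A. 1 / a j)"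
  define E where "E = (\<Sum>j\<in>A. a j * (z j)^2)"
  define Z where "Z = (\<Sum>j\<in>A. z j)"
  have R: "R > 0" unfolding R_def using assms False by (intro sum_pos) auto
  define t where "t = Z / R"
  have "0 \<le> (\<Sum>j\<in>A. a j * (z j - t / a j)^2)"
    using assms by (intro sum_nonneg mult_nonneg_nonneg) (auto intro: less_imp_le)
  also have "\<dots> = (\<Sum>j\<in>A. a j * (z j)^2 - 2 * t * z j + t^2 * (1 / a j))"
  proof (intro sum.cong refl)
    fix j assume "j \<in> A"
    then have "a j \<noteq> 0" using assms(2) by force
    then show "a j * (z j - t / a j)^2 = a j * (z j)^2 - 2 * t * z j + t^2 * (1 / a j)" by (rule W)
  qed
  also have "\<dots> = E - 2 * t * Z + t^2 * R"
    unfolding E_def Z_def R_def by (simp add: sum_subtractf sum.distrib sum_distrib_left)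
  also have "\<dots> = E - Z^2 / R"
    unfolding t_def using R by (simp add: power2_eq_square field_simps)
  finally have "Z^2 / R \<le> E" by simp
  then have "Z^2 \<le> E * R" using R by (simp add: divide_le_eq)
  then show ?thesis unfolding R_def E_def Z_def by (simp add: mult.commute)
qed

lemma tele: "i \<le> m \<Longrightarrow> (y::nat\<Rightarrow>real) i - y m = (\<Sum>j=i..<m. y j - y (Suc j))"
proof (induction m rule: dec_induct)
  case base then show ?case by simp
next
  case (step m) then show ?case by simp
qed

lemma exch: "(\<Sum>i<m. (vv i)^2 * (\<Sum>j=i..<m. 1 / aa j)) = (\<Sum>j<m. Tq j)"
proof (induction m)
  case 0 then show ?case by simp
next
  case (Suc m)
  have "(\<Sum>i<Suc m. (vv i)^2 * (\<Sum>j=i..<Suc m. 1 / aa j))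
      = (\<Sum>i<Suc m. (vv i)^2 * (\<Sum>j=i..<m. 1 / aa j) + (vv i)^2 / aa m)"
    by (intro sum.cong) (auto simp: algebra_simps)
  also have "\<dots> = (\<Sum>i<m. (vv i)^2 * (\<Sum>j=i..<m. 1 / aa j)) + (\<Sum>i\<le>m. (vv i)^2) / aa m"
  proof -
    have "(\<Sum>i<Suc m. (vv i)^2 * (\<Sum>j=i..<m. 1 / aa j)) = (\<Sum>i<m. (vv i)^2 * (\<Sum>j=i..<m. 1 / aa j))"
      by simp
    moreover have "(\<Sum>i<Suc m. (vv i)^2 / aa m) = (\<Sum>i\<le>m. (vv i)^2) / aa m"
      by (simp add: sum_divide_distrib[symmetric] lessThan_Suc_atMost)
    ultimately show ?thesis by (simp add: sum.distrib)
  qed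
  also have "\<dots> = (\<Sum>j<Suc m. Tq j)" using Suc by (simp add: Tq_eq)
  finally show ?case .
qed

lemma H2:
  assumes "y m = 0"
  shows "(\<Sum>i<m. (vv i * y i)^2) \<le> (\<Sum>j<m. Tq j) * (\<Sum>j<m. aa j * (y j - y (Suc j))^2)"
proof -
  define E where "E = (\<Sum>j<m. aa j * (y j - y (Suc j))^2)"
  have "(vv i * y i)^2 \<le> (vv i)^2 * (\<Sum>j=i..<m. 1 / aa j) * E" if i: "i < m" for i
  proof -
    have "y i = (\<Sum>j=i..<m. y j - y (Suc j))" using tele[of i m y] i assms by simp
    then have "(y i)^2 \<le> (\<Sum>j=i..<m. 1 / aa j) * (\<Sum>j=i..<m. aa j * (y j - y (Suc j))^2)"
      using wCS[of "{i..<m}" aa "\<lambda>j. y j - y (Suc j)"] aa_pos by simp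
    also have "\<dots> \<le> (\<Sum>j=i..<m. 1 / aa j) * E"
    proof -
      have nn: "0 \<le> aa j * (y j - y (Suc j))^2" for j using aa_pos[of j] by simp
      have nn2: "0 \<le> 1 / aa j" for j using aa_pos[of j] by simp
      show ?thesis unfolding E_def
        by (intro mult_left_mono sum_mono2 sum_nonneg nn nn2) auto
    qed
    finally show ?thesis by (simp add: power_mult_distrib mult.assoc mult_left_mono)
  qed
  then have "(\<Sum>i<m. (vv i * y i)^2) \<le> (\<Sum>i<m. (vv i)^2 * (\<Sum>j=i..<m. 1 / aa j) * E)"
    by (intro sum_mono) auto
  also have "\<dots> = (\<Sum>i<m. (vv i)^2 * (\<Sum>j=i..<m. 1 / aa j)) * E"
    by (simp add: sum_distrib_right)
  also have "\<dots> = (\<Sum>j<m. Tq j) * E" by (simp only: exch)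
  finally show ?thesis unfolding E_def .
qed

definition Mf :: "nat \<Rightarrow> nat \<Rightarrow> real" where
  "Mf i j = (if i = j then dd i else if j = i + 1 then - ww i else if i = j + 1 then - ww j else 0)"

lemma Dmat_Mf: "Dmat m = mat m m (\<lambda>(i, j). Mf i j)"
  unfolding Dmat_def Mf_def dd_def ww_def by simp

lemma Mf_sym: "Mf i j = Mf j i"
  unfolding Mf_def by auto

lemma QF_eq: "(\<Sum>i<Suc n. x i * (\<Sum>j<Suc n. Mf i j * x j))
  = (\<Sum>i<Suc n. dd i * (x i)^2) - 2 * (\<Sum>i<n. ww i * x i * x (Suc i))"
proof (induction n)
  case 0 then show ?case by (simp add: Mf_def power2_eq_square)
next
  case (Suc n)
  have c1: "(\<Sum>i<Suc n. Mf i (Suc n) * x i) = - ww n * x n"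
  proof -
    have "(\<Sum>i<n. Mf i (Suc n) * x i) = 0" by (intro sum.neutral) (auto simp: Mf_def)
    then show ?thesis by (simp add: Mf_def)
  qed
  have c2: "(\<Sum>j<Suc n. Mf (Suc n) j * x j) = - ww n * x n"
    using c1 by (simp add: Mf_sym)
  have "(\<Sum>i<Suc (Suc n). x i * (\<Sum>j<Suc (Suc n). Mf i j * x j))
     = (\<Sum>i<Suc n. x i * (\<Sum>j<Suc n. Mf i j * x j)) + (\<Sum>i<Suc n. x i * Mf i (Suc n) * x (Suc n))
       + x (Suc n) * (\<Sum>j<Suc n. Mf (Suc n) j * x j) + x (Suc n) * Mf (Suc n) (Suc n) * x (Suc n)"
    by (simp add: algebra_simps sum.distrib)
  also have "(\<Sum>i<Suc n. x i * Mf i (Suc n) * x (Suc n)) = x (Suc n) * (\<Sum>i<Suc n. Mf i (Suc n) * x i)"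
    by (simp add: sum_distrib_left algebra_simps)
  finally show ?case unfolding Suc c1 c2 by (simp add: Mf_def power2_eq_square algebra_simps)
qed

lemma QF_bound:
  "(\<Sum>i<Suc n. (x i)^2) \<le> (\<Sum>j<Suc n. Tq j) * ((\<Sum>i<Suc n. dd i * (x i)^2) - 2 * (\<Sum>i<n. ww i * x i * x (Suc i)))"
proof -
  define y where "y i = (if i < Suc n then x i / vv i else 0)" for i
  have vy: "vv i * y i = x i" if "i < Suc n" for i
    using that vv_pos[of i] by (simp add: y_def)
  have "(\<Sum>i<Suc n. dd i * (x i)^2) - 2 * (\<Sum>i<n. ww i * x i * x (Suc i))
     = (\<Sum>i<Suc n. dd i * (vv i * y i)^2) - 2 * (\<Sum>i<n. ww i * (vv i * y i) * (vv (Suc i) * y (Suc i)))"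
    using vy by (simp del: vv.simps)
  also have "\<dots> = (\<Sum>i<n. aa i * (y i - y (Suc i))^2) + aa n * (y n)^2" by (rule H1)
  also have "\<dots> = (\<Sum>i<Suc n. aa i * (y i - y (Suc i))^2)" by (simp add: y_def)
  finally have e: "(\<Sum>i<Suc n. dd i * (x i)^2) - 2 * (\<Sum>i<n. ww i * x i * x (Suc i)) = (\<Sum>i<Suc n. aa i * (y i - y (Suc i))^2)" .
  have "(\<Sum>i<Suc n. (x i)^2) = (\<Sum>i<Suc n. (vv i * y i)^2)"
    using vy by (simp del: vv.simps)
  also have "\<dots> \<le> (\<Sum>j<Suc n. Tq j) * (\<Sum>i<Suc n. aa i * (y i - y (Suc i))^2)"
    by (rule H2) (simp add: y_def)
  finally show ?thesis unfolding e .
qed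

lemma Dmat_carrier: "Dmat m \<in> carrier_mat m m"
  unfolding Dmat_def by simp

lemma Dmat_index: "i < m \<Longrightarrow> j < m \<Longrightarrow> Dmat m $$ (i, j) = Mf i j"
  unfolding Dmat_Mf by simp

lemma mult_vec_index:
  fixes u :: "'a :: {comm_ring_1} vec"
  assumes "u \<in> carrier_vec m" "i < m" "B \<in> carrier_mat m m"
  shows "(B *\<^sub>v u) $ i = (\<Sum>j<m. B $$ (i, j) * u $ j)"
  using assms by (simp add: scalar_prod_def lessThan_atLeast0)

lemma real_eig_bound:
  assumes m: "m \<ge> 1" and ev: "eigenvalue (Dmat m) l"
  shows "l \<ge> 1 / (\<Sum>j<m. Tq j)"
proof -
  obtain u where u: "u \<in> carrier_vec m" "u \<noteq> 0\<^sub>v m" "Dmat m *\<^sub>v u = l \<cdot>\<^sub>v u"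
    using ev unfolding eigenvalue_def eigenvector_def by (auto simp: Dmat_def)
  define x where "x i = u $ i" for i
  obtain n where n: "m = Suc n" using m by (cases m) auto
  have row: "(\<Sum>j<m. Mf i j * x j) = l * x i" if "i < m" for i
  proof -
    have "(Dmat m *\<^sub>v u) $ i = (\<Sum>j<m. Mf i j * x j)"
      using mult_vec_index[OF u(1) that Dmat_carrier] that by (simp add: Dmat_index x_def)
    moreover have "(Dmat m *\<^sub>v u) $ i = l * x i" using u(3) u(1) that by (simp add: x_def)
    ultimately show ?thesis by simp
  qed
  have "(\<Sum>i<m. x i * (\<Sum>j<m. Mf i j * x j)) = l * (\<Sum>i<m. (x i)^2)"
    using row by (simp add: sum_distrib_left power2_eq_square algebra_simps)
  moreover have N: "(\<Sum>i<m. (x i)^2) > 0"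
  proof (rule ccontr)
    assume "\<not> ?thesis"
    then have "(\<Sum>i<m. (x i)^2) = 0" by (simp add: sum_nonneg antisym_conv2)
    then have "\<forall>i\<in>{..<m}. (x i)^2 = 0" by (subst sum_nonneg_eq_0_iff[symmetric]) auto
    then have "u = 0\<^sub>v m" using u(1) by (intro eq_vecI) (auto simp: x_def)
    then show False using u(2) by simp
  qed
  moreover have "(\<Sum>i<m. (x i)^2) \<le> (\<Sum>j<m. Tq j) * (\<Sum>i<m. x i * (\<Sum>j<m. Mf i j * x j))"
    unfolding n QF_eq by (rule QF_bound)
  moreover have "(\<Sum>j<m. Tq j) > 0" using Tq_pos by (intro sum_pos) (auto simp: n)
  ultimately have "(\<Sum>i<m. (x i)^2) \<le> (\<Sum>j<m. Tq j) * l * (\<Sum>i<m. (x i)^2)" by simp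
  then have "1 \<le> (\<Sum>j<m. Tq j) * l" using N by simp
  then show ?thesis using \<open>(\<Sum>j<m. Tq j) > 0\<close> by (simp add: divide_le_eq mult.commute)
qed

lemma exists_eig:
  assumes m: "m \<ge> 1"
  shows "\<exists>l. eigenvalue (Dmat m) l"
proof -
  define A where "A = Dmat m"
  have A: "A \<in> carrier_mat m m" unfolding A_def by (rule Dmat_carrier)
  define p where "p = char_poly A"
  define Ac where "Ac = map_mat complex_of_real A"
  have Ac: "Ac \<in> carrier_mat m m" unfolding Ac_def using A by simp
  have cp: "char_poly Ac = map_poly complex_of_real p"
    unfolding Ac_def p_def by (rule of_real_hom.char_poly_hom[OF A])
  have "degree p = m" using degree_monic_char_poly[OF A] by (simp add: p_def)
  then have "degree (map_poly complex_of_real p) \<noteq> 0" using m by simp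
  then have "\<not> constant (poly (map_poly complex_of_real p))" by (simp add: constant_degree)
  from fundamental_theorem_of_algebra[OF this] obtain c where c: "poly (map_poly complex_of_real p) c = 0"
    by blast
  have "eigenvalue Ac c" using c cp eigenvalue_root_char_poly[OF Ac] by simp
  then obtain z where z: "z \<in> carrier_vec m" "z \<noteq> 0\<^sub>v m" "Ac *\<^sub>v z = c \<cdot>\<^sub>v z"
    unfolding eigenvalue_def eigenvector_def using Ac by auto
  define x where "x i = z $ i" for i
  have row: "(\<Sum>j<m. complex_of_real (Mf i j) * x j) = c * x i" if i: "i < m" for i
  proof -
    have "(Ac *\<^sub>v z) $ i = (\<Sum>j<m. Ac $$ (i, j) * z $ j)"
      by (rule mult_vec_index[OF z(1) i Ac])
    also have "\<dots> = (\<Sum>j<m. complex_of_real (Mf i j) * x j)"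
      using i A by (intro sum.cong) (auto simp: Ac_def A_def Dmat_index x_def)
    finally show ?thesis using z(3) z(1) i by (simp add: x_def)
  qed
  define s where "s = (\<Sum>i<m. cnj (x i) * (\<Sum>j<m. complex_of_real (Mf i j) * x j))"
  define N where "N = (\<Sum>i<m. cnj (x i) * x i)"
  have "s = (\<Sum>i<m. cnj (x i) * (c * x i))" unfolding s_def
    by (intro sum.cong) (auto simp: row)
  also have "\<dots> = c * N" unfolding N_def by (simp add: sum_distrib_left algebra_simps)
  finally have sN: "s = c * N" .
  have "cnj s = (\<Sum>i<m. x i * (\<Sum>j<m. complex_of_real (Mf i j) * cnj (x j)))"
    unfolding s_def by simp
  also have "\<dots> = (\<Sum>i<m. \<Sum>j<m. complex_of_real (Mf i j) * x i * cnj (x j))"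
    by (simp add: sum_distrib_left algebra_simps)
  also have "\<dots> = (\<Sum>j<m. \<Sum>i<m. complex_of_real (Mf i j) * x i * cnj (x j))"
    by (rule sum.swap)
  also have "\<dots> = s"
    unfolding s_def by (simp add: sum_distrib_left algebra_simps Mf_sym)
  finally have cs: "cnj s = s" .
  have Nr: "N = complex_of_real (\<Sum>i<m. (Re (x i))^2 + (Im (x i))^2)"
    unfolding N_def by (simp add: complex_mult_cnj mult.commute)
  have N0: "N \<noteq> 0"
  proof
    assume "N = 0"
    then have "(\<Sum>i<m. (Re (x i))^2 + (Im (x i))^2) = 0" using Nr by (metis of_real_eq_0_iff)
    then have "\<forall>i\<in>{..<m}. (Re (x i))^2 + (Im (x i))^2 = 0"
      by (subst sum_nonneg_eq_0_iff[symmetric]) auto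
    then have "\<forall>i<m. x i = 0" by (auto simp: complex_eq_iff)
    then have "z = 0\<^sub>v m" using z(1) by (intro eq_vecI) (auto simp: x_def)
    then show False using z(2) by simp
  qed
  have cN: "cnj N = N" unfolding Nr by simp
  have "cnj c * N = c * N" using cs sN cN by (metis complex_cnj_mult)
  then have "cnj c = c" using N0 by simp
  then have "Im c = 0" by (simp add: complex_eq_iff)
  then have cr: "c = complex_of_real (Re c)" by (simp add: complex_eq_iff)
  have pm: "poly (map_poly complex_of_real p) (complex_of_real (Re c)) = complex_of_real (poly p (Re c))"
    by (rule of_real_hom.poly_map_poly)
  have "complex_of_real (poly p (Re c)) = 0"
    using c cr pm by metis
  then have "poly (char_poly A) (Re c) = 0" by (simp add: p_def)
  then have "eigenvalue A (Re c)" using eigenvalue_root_char_poly[OF A] by simp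
  then show ?thesis unfolding A_def by blast
qed

lemma eig_finite:
  assumes m: "m \<ge> 1"
  shows "finite {x. eigenvalue (Dmat m) x}"
proof -
  have A: "Dmat m \<in> carrier_mat m m" by (rule Dmat_carrier)
  have "degree (char_poly (Dmat m)) = m" using degree_monic_char_poly[OF A] by simp
  then have "char_poly (Dmat m) \<noteq> 0" using m by auto
  then have "finite {x. poly (char_poly (Dmat m)) x = 0}" by (rule poly_roots_finite)
  then show ?thesis using eigenvalue_root_char_poly[OF A] by simp
qed

theorem proposition4p3:
  fixes m :: nat
  assumes "m \<ge> 2"
  shows "lambda_min (Dmat m) > 4 / ((ln (real m))^2 + 8 * ln (real m) + 8)"
proof -
  have m1: "m \<ge> 1" using assms by simp
  define Ev where "Ev = {x. eigenvalue (Dmat m) x}"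
  have fin: "finite Ev" unfolding Ev_def by (rule eig_finite[OF m1])
  have ne: "Ev \<noteq> {}" unfolding Ev_def using exists_eig[OF m1] by auto
  have mem: "Min Ev \<in> Ev" using fin ne by (rule Min_in)
  then have lb: "Min Ev \<ge> 1 / (\<Sum>j<m. Tq j)" unfolding Ev_def using real_eig_bound[OF m1] by simp
  have z0: "0 \<in> {..<m}" using m1 by simp
  have Spos: "(\<Sum>j<m. Tq j) > 0" using Tq_pos z0 by (intro sum_pos) auto
  have SF: "(\<Sum>j<m. Tq j) < Fb m" by (rule S_bound[OF assms])
  then have "1 / Fb m < 1 / (\<Sum>j<m. Tq j)" using Spos by (intro divide_strict_left_mono) auto
  moreover have "1 / Fb m = 4 / ((ln (real m))^2 + 8 * ln (real m) + 8)" unfolding Fb_def by simp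
  ultimately show ?thesis using lb unfolding lambda_min_def Ev_def[symmetric] by linarith
qed

end
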